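(* Let $(a_n)_{n\ge1}$ be a relative convex real sequence which is bounded above. Then either $(a_n)_{n\ge1}$ is non-increasing, or every sequence $(t_n)_{n\ge1}\in T_a$ is convergent. More precisely, if some $(t_n)_{n\ge1}\in T_a$ satisfies $t_n\to\infty$, then $\Delta a_n\le0$ for all $n\ge1$.
   Context: For a real sequence $(x_i)$, $\Delta x_i=x_{i+1}-x_i$. "Increasing" means strictly increasing. For a real sequence $a=(a_i)_{i\ge1}$, $T_a$ denotes the set of increasing real sequences $(t_i)_{i\ge1}$ such that $(\Delta a_i/\Delta t_i)_{i\ge1}$ is non-decreasing; $a$ is relative convex if $T_a\neq\emptyset$. *)

theory Defs
  imports Complex_Main
begin

text \<open>Sequences indexed by nat (index 0 plays the role of index 1 in the paper).\<close>

definition Delta :: "(nat \<Rightarrow> real) \<Rightarrow> nat \<Rightarrow> real" where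
  "Delta x i = x (Suc i) - x i"

definition T_set :: "(nat \<Rightarrow> real) \<Rightarrow> (nat \<Rightarrow> real) set" where
  "T_set a = {t. strict_mono t \<and> mono (\<lambda>i. Delta a i / Delta t i)}"

definition relative_convex :: "(nat \<Rightarrow> real) \<Rightarrow> bool" where
  "relative_convex a \<longleftrightarrow> T_set a \<noteq> {}"

end

theory Submission
  imports Defs
begin

lemma core:
  fixes a t :: "nat \<Rightarrow> real"
  assumes t: "t \<in> T_set a" and ba: "bdd_above (range a)"
    and ub: "\<And>B. \<exists>m. t m > B"
  shows "Delta a n \<le> 0"
proof (rule ccontr)
  assume "\<not> Delta a n \<le> 0"
  have sm: "strict_mono t" and mo: "mono (\<lambda>i. Delta a i / Delta t i)"
    using t by (auto simp: T_set_def)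
  have dtp: "\<And>i. Delta t i > 0" using sm by (simp add: Delta_def strict_mono_def)
  define r where "r = Delta a n / Delta t n"
  have rp: "r > 0" using dtp[of n] \<open>\<not> Delta a n \<le> 0\<close> by (simp add: r_def)
  have key: "a m - a n \<ge> r * (t m - t n)" if "n \<le> m" for m
    using that
  proof (induction m rule: dec_induct)
    case base then show ?case by simp
  next
    case (step m)
    have "r \<le> Delta a m / Delta t m" using mo step.hyps(1) unfolding r_def mono_def by blast
    hence "r * Delta t m \<le> Delta a m" using dtp[of m] by (simp add: pos_le_divide_eq)
    thus ?case using step.IH by (simp add: Delta_def algebra_simps)
  qed
  obtain M where M: "\<And>i. a i \<le> M" using ba by (auto simp: bdd_above_def)
  obtain m where m: "t m > t n + (M - a n) / r" using ub by blast
  show False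
  proof (cases "n \<le> m")
    case True
    have "r * (t m - t n) \<le> M - a n" using key[OF True] M[of m] by linarith
    hence "t m - t n \<le> (M - a n) / r" using rp by (simp add: pos_le_divide_eq mult.commute)
    thus False using m by linarith
  next
    case False
    have "t m < t n" using sm False by (simp add: strict_mono_less)
    moreover have "(M - a n)/r \<ge> 0" using rp M[of n] by simp
    ultimately show False using m by linarith
  qed
qed

theorem proposition3p4:
  fixes a :: "nat \<Rightarrow> real"
  assumes "relative_convex a"
    and "bdd_above (range a)"
  shows "(decseq a \<or> (\<forall>t\<in>T_set a. convergent t))
       \<and> ((\<exists>t\<in>T_set a. filterlim t at_top sequentially) \<longrightarrow> (\<forall>n. Delta a n \<le> 0))"
proof
  show "decseq a \<or> (\<forall>t\<in>T_set a. convergent t)"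
  proof (cases "\<forall>t\<in>T_set a. convergent t")
    case False
    then obtain t where t: "t \<in> T_set a" and nc: "\<not> convergent t" by blast
    have sm: "strict_mono t" using t by (simp add: T_set_def)
    hence inc: "incseq t" by (simp add: strict_mono_mono)
    have "\<exists>m. t m > B" for B
    proof (rule ccontr)
      assume "\<not> (\<exists>m. t m > B)"
      hence "\<And>m. t m \<le> B" by (simp add: not_less)
      then obtain L where "t \<longlonglongrightarrow> L" using inc incseq_convergent[of t B] by blast
      hence "convergent t" by (auto simp: convergent_def)
      thus False using nc by simp
    qed
    hence "\<And>n. Delta a n \<le> 0" using core[OF t assms(2)] by blast
    hence "decseq a" by (intro decseq_SucI) (simp add: Delta_def)
    thus ?thesis by simp
  qed simp
  show "(\<exists>t\<in>T_set a. filterlim t at_top sequentially) \<longrightarrow> (\<forall>n. Delta a n \<le> 0)"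
  proof (intro impI allI)
    fix n
    assume "\<exists>t\<in>T_set a. filterlim t at_top sequentially"
    then obtain t where t: "t \<in> T_set a" and f: "filterlim t at_top sequentially" by blast
    have "\<exists>m. t m > B" for B
    proof -
      have "eventually (\<lambda>m. t m > B) sequentially" using f by (simp add: filterlim_at_top_dense)
      thus ?thesis by (meson eventually_sequentially order_refl)
    qed
    thus "Delta a n \<le> 0" using core[OF t assms(2)] by blast
  qed
qed

end
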